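(* Assume that for every $i\in\{1,\dots,M\}$: $K_i$ is such that $F_{ii}=A_{ii}+B_{ii}K_i$ is Schur; $Z_i\subset\mathbb{R}^{n_i}$ is a compact convex set containing the origin in its interior with $F_{ii}Z_i\oplus W_i\subseteq Z_i$; and there exist compact convex sets $\hat X_i\subseteq\mathbb{R}^{n_i}$, $\hat U_i\subseteq\mathbb{R}^{m_i}$, each containing the origin in its interior, with $\hat X_i\subseteq X_i\ominus Z_i$ and $\hat U_i\subseteq U_i\ominus K_iZ_i$ (these are the tightened nominal constraint sets of a tube MPC scheme). Then $F=A+BK$ with $K=\mathrm{diag}(K_1,\dots,K_M)$ is Schur.
   Context: A network of $M$ linear time-invariant subsystems, indexed by $i\in\{1,\dots,M\}$, with states $x^i\in\mathbb{R}^{n_i}$ and inputs $u^i\in\mathbb{R}^{m_i}$, evolves as $x^i_{t+1}=A_{ii}x^i_t+B_{ii}u^i_t+\sum_{j\in\mathcal{N}_i}(A_{ij}x^j_t+B_{ij}u^j_t)$, where $\mathcal{N}_i\subseteq\{1,\dots,M\}\setminus\{i\}$ is the set of neighbours of $i$; set $A_{ij}=0$, $B_{ij}=0$ for $j\notin\mathcal{N}_i\cup\{i\}$. The global model is $x_{t+1}=Ax_t+Bu_t$ with $A$, $B$ the block matrices with blocks $A_{ij}$, $B_{ij}$. Local constraint sets $X_i\subset\mathbb{R}^{n_i}$, $U_i\subset\mathbb{R}^{m_i}$ are compact, convex, and contain the origin in their interiors. The disturbance set of subsystem $i$ is $W_i=\bigoplus_{j\in\mathcal{N}_i}(A_{ij}X_j\oplus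 B_{ij}U_j)$ (with $W_i=\{0\}$ if $\mathcal{N}_i=\emptyset$). Notation: $\mathcal{A}\oplus\mathcal{B}=\{a+b:a\in\mathcal{A},b\in\mathcal{B}\}$ (Minkowski sum), $\mathcal{A}\ominus\mathcal{B}=\{a:a+b\in\mathcal{A}\ \forall b\in\mathcal{B}\}$ (Pontryagin difference), $MS=\{Ms:s\in S\}$. A square matrix is Schur if its spectral radius is $<1$. *)

theory Defs
  imports "HOL-Analysis.Analysis"
begin

text \<open>Global coordinates: state coordinates of type 'n, input coordinates of type 'p.
  The map sx (resp. su) assigns each state (resp. input) coordinate to the subsystem
  owning it; the local space R^{n_i} is identified with the coordinate subspace
  of the global space supported on the coordinates of subsystem i.\<close>

definition loc_space :: "('c \<Rightarrow> 'm) \<Rightarrow> 'm \<Rightarrow> (real^'c) set" where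
  "loc_space s i = {x. \<forall>r. s r \<noteq> i \<longrightarrow> x $ r = 0}"

text \<open>Block (i,j) of a matrix whose rows are partitioned by sr and columns by sc,
  embedded in the global matrix (zeros outside the block).\<close>
definition blk :: "('r \<Rightarrow> 'm) \<Rightarrow> ('c \<Rightarrow> 'm) \<Rightarrow> 'm \<Rightarrow> 'm \<Rightarrow> real^'c^'r \<Rightarrow> real^'c^'r" where
  "blk sr sc i j M = (\<chi> r c. if sr r = i \<and> sc c = j then M $ r $ c else 0)"

definition cmat :: "real^'c^'r \<Rightarrow> complex^'c^'r" where
  "cmat A = (\<chi> r c. complex_of_real (A $ r $ c))"

text \<open>Schur: spectral radius < 1, i.e. every (complex) eigenvalue has modulus < 1.\<close>
definition schur :: "real^'n^'n \<Rightarrow> bool" where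
  "schur A \<longleftrightarrow> (\<forall>(lam::complex) v. v \<noteq> 0 \<and> cmat A *v v = lam *s v \<longrightarrow> cmod lam < 1)"

text \<open>Compact convex subset of the local space containing the origin in its interior
  (interior taken in the local space R^{n_i}).\<close>
definition local_C_set :: "('c \<Rightarrow> 'm) \<Rightarrow> 'm \<Rightarrow> (real^'c) set \<Rightarrow> bool" where
  "local_C_set s i S \<longleftrightarrow> S \<subseteq> loc_space s i \<and> compact S \<and> convex S \<and>
     (\<exists>e>0. cball 0 e \<inter> loc_space s i \<subseteq> S)"

definition msum :: "('a::plus) set \<Rightarrow> 'a set \<Rightarrow> 'a set" where
  "msum P Q = {a + b | a b. a \<in> P \<and> b \<in> Q}"

definition pdiff :: "('a::plus) set \<Rightarrow> 'a set \<Rightarrow> 'a set" where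
  "pdiff P Q = {a. \<forall>b\<in>Q. a + b \<in> P}"

text \<open>Disturbance set W_i = (Minkowski sum over j in N_i) (A_ij X_j + B_ij U_j);
  equals {0} if N_i is empty.\<close>
definition wset :: "real^'n^'n \<Rightarrow> real^'p^'n \<Rightarrow> ('n \<Rightarrow> 'm) \<Rightarrow> ('p \<Rightarrow> 'm)
    \<Rightarrow> ('m \<Rightarrow> 'm set) \<Rightarrow> ('m \<Rightarrow> (real^'n) set) \<Rightarrow> ('m \<Rightarrow> (real^'p) set) \<Rightarrow> 'm \<Rightarrow> (real^'n) set" where
  "wset A B sx su N X U i =
     {(\<Sum>j\<in>N i. blk sx sx i j A *v x j + blk sx su i j B *v u j) | x u.
        \<forall>j\<in>N i. x j \<in> X j \<and> u j \<in> U j}"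

end

theory Submission
  imports Defs "Jordan_Normal_Form.Spectral_Radius"
begin

no_notation Matrix.vec_index (infixl "$" 100)

primrec mpow :: "'a::semiring_1^'n^'n \<Rightarrow> nat \<Rightarrow> 'a^'n^'n" where
  "mpow M 0 = Finite_Cartesian_Product.mat 1"
| "mpow M (Suc k) = mpow M k ** M"

lemma mpow_comm: "M ** mpow M k = mpow M k ** M"
  by (induction k) (simp_all add: matrix_mul_assoc)

lemma funpow_mpow: "(((*v) M) ^^ k) y = mpow M k *v y"
  by (induction k) (simp_all, metis matrix_vector_mul_assoc mpow_comm)

definition idx :: "'n::finite \<Rightarrow> nat" where
  "idx = (SOME f. bij_betw f (UNIV::'n set) {..<CARD('n)})"

lemma idx_bij: "bij_betw (idx::'n::finite \<Rightarrow> nat) UNIV {..<CARD('n)}"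
proof -
  have "\<exists>f. bij_betw f (UNIV::'n set) {..<CARD('n)}"
    using ex_bij_betw_finite_nat[of "UNIV::'n set"] by (simp add: atLeast0LessThan)
  thus ?thesis unfolding idx_def by (rule someI_ex)
qed

definition ix :: "nat \<Rightarrow> 'n::finite" where "ix = inv_into UNIV idx"

lemma ix_bij: "bij_betw (ix::nat \<Rightarrow> 'n::finite) {..<CARD('n)} UNIV"
  unfolding ix_def by (rule bij_betw_inv_into[OF idx_bij])

lemma idx_lt[simp]: "idx (c::'n::finite) < CARD('n)"
  using idx_bij unfolding bij_betw_def by auto

lemma ix_idx[simp]: "ix (idx (c::'n::finite)) = c"
  unfolding ix_def using idx_bij[where 'n='n] unfolding bij_betw_def by (simp add: inv_into_f_f)

lemma idx_ix[simp]: "i < CARD('n::finite) \<Longrightarrow> idx (ix i :: 'n) = i"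
  unfolding ix_def using idx_bij[where 'n='n] unfolding bij_betw_def by (simp add: f_inv_into_f)

lemma ix_inj: "i < CARD('n::finite) \<Longrightarrow> j < CARD('n) \<Longrightarrow> (ix i :: 'n) = ix j \<longleftrightarrow> i = j"
  by (metis idx_ix)

lemma sum_ix: "(\<Sum>k<CARD('n::finite). g (ix k :: 'n)) = (\<Sum>c\<in>UNIV. g c)"
  using sum.reindex_bij_betw[OF ix_bij, of g] by simp

lemma sum_ix0: "(\<Sum>k = 0..<CARD('n::finite). g (ix k :: 'n)) = (\<Sum>c\<in>UNIV. g c)"
  using sum_ix[of g] by (simp add: atLeast0LessThan)

definition to_mat :: "'a^'n::finite^'n \<Rightarrow> 'a Matrix.mat" where
  "to_mat X = Matrix.mat CARD('n) CARD('n) (\<lambda>(i,j). X $ ix i $ ix j)"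

lemma to_mat_carrier[simp]: "to_mat (X::'a^'n::finite^'n) \<in> carrier_mat CARD('n) CARD('n)"
  unfolding to_mat_def by simp

lemma to_mat_dim[simp]: "dim_row (to_mat (X::'a^'n::finite^'n)) = CARD('n)" "dim_col (to_mat (X::'a^'n::finite^'n)) = CARD('n)"
  unfolding to_mat_def by simp_all

lemma to_mat_index: "i < CARD('n) \<Longrightarrow> j < CARD('n) \<Longrightarrow> to_mat (X::'a^'n::finite^'n) $$ (i,j) = X $ ix i $ ix j"
  unfolding to_mat_def by simp

lemma to_mat_mult: "to_mat ((X::'a::semiring_1^'n::finite^'n) ** Y) = to_mat X * to_mat Y"
  by (rule eq_matI) (auto simp: to_mat_index scalar_prod_def matrix_matrix_mult_def index_row intro: sum_ix0[symmetric])

lemma to_mat_one: "to_mat (Finite_Cartesian_Product.mat 1 :: 'a::semiring_1^'n::finite^'n) = 1\<^sub>m CARD('n)"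
  by (rule eq_matI) (auto simp: to_mat_index Finite_Cartesian_Product.mat_def ix_inj)

lemma to_mat_pow: "to_mat (mpow (X::'a::semiring_1^'n::finite^'n) k) = to_mat X ^\<^sub>m k"
  by (induction k) (simp_all add: to_mat_one to_mat_mult)

definition from_vec :: "'a Matrix.vec \<Rightarrow> 'a^'n::finite" where
  "from_vec w = (\<chi> c. vec_index w (idx c))"

lemma to_mat_mult_vec: "w \<in> carrier_vec CARD('n) \<Longrightarrow> i < CARD('n) \<Longrightarrow>
   vec_index (to_mat (X::'a::semiring_1^'n::finite^'n) *\<^sub>v w) i = (X *v from_vec w) $ ix i"
proof -
  assume w: "w \<in> carrier_vec CARD('n)" and i: "i < CARD('n)"
  have "vec_index (to_mat X *\<^sub>v w) i = (\<Sum>k = 0..<CARD('n). X $ ix i $ ix k * vec_index w k)"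
    using w i by (simp add: to_mat_index scalar_prod_def index_row)
  also have "\<dots> = (\<Sum>k = 0..<CARD('n). X $ ix i $ ix k * vec_index w (idx (ix k :: 'n)))"
    by (rule sum.cong) auto
  also have "\<dots> = (\<Sum>c\<in>UNIV. X $ ix i $ c * vec_index w (idx c))"
    by (rule sum_ix0)
  finally show ?thesis by (simp add: matrix_vector_mult_def from_vec_def)
qed

lemma eig_transfer:
  fixes X :: "'a::comm_ring_1^'n::finite^'n"
  assumes "eigenvector (to_mat X) w lam"
  shows "(from_vec w :: 'a^'n) \<noteq> 0 \<and> X *v from_vec w = lam *s from_vec w"
proof -
  have w: "w \<in> carrier_vec CARD('n)" "w \<noteq> 0\<^sub>v CARD('n)" "to_mat X *\<^sub>v w = lam \<cdot>\<^sub>v w"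
    using assms unfolding eigenvector_def by auto
  have "\<forall>c. (X *v from_vec w) $ c = (lam *s from_vec w) $ c"
  proof
    fix c :: 'n
    have "(X *v from_vec w) $ c = vec_index (to_mat X *\<^sub>v w) (idx c)"
      using to_mat_mult_vec[OF w(1) idx_lt[of c], of X] by simp
    also have "\<dots> = lam * vec_index w (idx c)" using w by simp
    finally show "(X *v from_vec w) $ c = (lam *s from_vec w) $ c" by (simp add: from_vec_def)
  qed
  hence "X *v from_vec w = lam *s from_vec w" by (simp add: Finite_Cartesian_Product.vec_eq_iff)
  moreover have "(from_vec w :: 'a^'n) \<noteq> 0"
  proof
    assume h: "from_vec w = (0::'a^'n)"
    have z: "vec_index w i = 0" if i: "i < CARD('n)" for i
    proof -
      have "vec_index w i = from_vec w $ (ix i :: 'n)" using i by (simp add: from_vec_def)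
      thus ?thesis using h by simp
    qed
    have "w = 0\<^sub>v CARD('n)"
      by (rule eq_vecI) (use w z in auto)
    with w show False by simp
  qed
  ultimately show ?thesis by simp
qed

lemma cmat_mult: "cmat ((X::real^'k::finite^'n) ** (Y::real^'m^'k)) = cmat X ** cmat Y"
  by (simp add: cmat_def matrix_matrix_mult_def Finite_Cartesian_Product.vec_eq_iff)

lemma cmat_one: "cmat (Finite_Cartesian_Product.mat 1 :: real^'n::finite^'n) = Finite_Cartesian_Product.mat 1"
  by (simp add: cmat_def Finite_Cartesian_Product.mat_def Finite_Cartesian_Product.vec_eq_iff)

lemma cmat_mpow: "cmat (mpow (X::real^'n::finite^'n) k) = mpow (cmat X) k"
  by (induction k) (simp_all add: cmat_one cmat_mult)

lemma one_smult_mat: "(1::'a::monoid_mult) \<cdot>\<^sub>m A = A"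
  by (rule eq_matI) auto

lemma smult_mat_mult_vec: "A \<in> carrier_mat n n \<Longrightarrow> v \<in> carrier_vec n \<Longrightarrow>
   ((c::'a::comm_ring_1) \<cdot>\<^sub>m A) *\<^sub>v v = c \<cdot>\<^sub>v (A *\<^sub>v v)"
  by (rule eq_vecI) (auto simp: scalar_prod_def sum_distrib_left mult.assoc)

lemma smult_pow_mat: "A \<in> carrier_mat n n \<Longrightarrow> ((c::complex) \<cdot>\<^sub>m A) ^\<^sub>m k = (c ^ k) \<cdot>\<^sub>m (A ^\<^sub>m k)"
proof (induction k)
  case 0 thus ?case by (simp add: one_smult_mat)
next
  case (Suc k)
  have "(c \<cdot>\<^sub>m A) ^\<^sub>m Suc k = (c ^ k \<cdot>\<^sub>m A ^\<^sub>m k) * (c \<cdot>\<^sub>m A)" using Suc by simp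
  also have "\<dots> = c ^ k \<cdot>\<^sub>m (A ^\<^sub>m k * (c \<cdot>\<^sub>m A))"
    by (rule mult_smult_assoc_mat[where nr=n and n=n and nc=n]) (auto simp: Suc.prems)
  also have "\<dots> = c ^ k \<cdot>\<^sub>m (c \<cdot>\<^sub>m (A ^\<^sub>m k * A))"
    by (subst mult_smult_distrib[where nr=n and n=n and nc=n]) (auto simp: Suc.prems)
  also have "\<dots> = (c ^ Suc k) \<cdot>\<^sub>m (A ^\<^sub>m Suc k)"
    by (rule eq_matI) (simp_all add: ac_simps)
  finally show ?case .
qed

lemma schur_sr:
  fixes M :: "real^'n::finite^'n" assumes "schur M"
  shows "spectral_radius (to_mat (cmat M)) < 1"
proof -
  let ?T = "to_mat (cmat M)"
  have n: "0 < CARD('n)" by simp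
  from spectral_radius_mem_max(1)[OF to_mat_carrier n]
  obtain lam where lam: "lam \<in> spectrum ?T" "spectral_radius ?T = norm lam" by force
  then obtain w where "eigenvector ?T w lam" unfolding spectrum_def eigenvalue_def by auto
  from eig_transfer[OF this] assms have "cmod lam < 1" unfolding schur_def by blast
  with lam show ?thesis by simp
qed

lemma decay:
  fixes M :: "real^'n::finite^'n" assumes "schur M"
  shows "\<exists>C r. 0 < r \<and> r < 1 \<and> (\<forall>k y. norm (mpow M k *v y) \<le> C * r^k * norm y)"
proof -
  let ?T = "to_mat (cmat M)"
  define sr where "sr = spectral_radius ?T"
  have n: "0 < CARD('n)" by simp
  have T: "?T \<in> carrier_mat CARD('n) CARD('n)" by simp
  have sr1: "sr < 1" using schur_sr[OF assms] by (simp add: sr_def)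
  have sr0: "0 \<le> sr" using spectral_radius_mem_max(1)[OF T n] by (auto simp: sr_def)
  define r where "r = (1 + sr) / 2"
  have r0: "0 < r" and r1: "r < 1" and srr: "sr < r" using sr0 sr1 by (auto simp: r_def)
  define T' where "T' = complex_of_real (1/r) \<cdot>\<^sub>m ?T"
  have T': "T' \<in> carrier_mat CARD('n) CARD('n)" by (simp add: T'_def)
  have "spectral_radius T' < 1"
  proof -
    from spectral_radius_mem_max(1)[OF T' n]
    obtain mu where mu: "mu \<in> spectrum T'" "spectral_radius T' = norm mu" by force
    then obtain w where ev: "eigenvector T' w mu" unfolding spectrum_def eigenvalue_def by auto
    hence w: "w \<in> carrier_vec CARD('n)" "w \<noteq> 0\<^sub>v CARD('n)" "T' *\<^sub>v w = mu \<cdot>\<^sub>v w"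
      unfolding eigenvector_def using T' by auto
    have "?T *\<^sub>v w = complex_of_real r \<cdot>\<^sub>v (T' *\<^sub>v w)"
    proof -
      have "complex_of_real r \<cdot>\<^sub>v (T' *\<^sub>v w) = complex_of_real r \<cdot>\<^sub>v (complex_of_real (1/r) \<cdot>\<^sub>v (?T *\<^sub>v w))"
        unfolding T'_def using smult_mat_mult_vec[OF T w(1)] by simp
      also have "\<dots> = (complex_of_real r * complex_of_real (1/r)) \<cdot>\<^sub>v (?T *\<^sub>v w)"
        by (simp add: smult_smult_assoc)
      also have "complex_of_real r * complex_of_real (1/r) = 1"
        using r0 by (simp flip: of_real_mult)
      finally show ?thesis by simp
    qed
    also have "\<dots> = (complex_of_real r * mu) \<cdot>\<^sub>v w" using w(3) by (simp add: smult_smult_assoc)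
    finally have "eigenvector ?T w (complex_of_real r * mu)" unfolding eigenvector_def using w by simp
    hence "norm (complex_of_real r * mu) \<in> norm ` spectrum ?T"
      unfolding spectrum_def eigenvalue_def by auto
    from spectral_radius_mem_max(2)[OF T n this]
    have "r * norm mu \<le> sr" using r0 by (simp add: sr_def norm_mult)
    hence "norm mu < 1" using srr r0
      by (smt (verit) mult_le_cancel_left1 norm_ge_zero)
    with mu show ?thesis by simp
  qed
  from spectral_radius_jnf_norm_bound_less_1_upper_triangular[OF T' this]
  obtain c where c: "\<And>k. norm_bound (T' ^\<^sub>m k) c" by auto
  have ent: "\<bar>mpow M k $ a $ b\<bar> \<le> c * r^k" for k a b
  proof -
    have "norm ((T' ^\<^sub>m k) $$ (idx a, idx b)) \<le> c"
      using c[of k] T' unfolding norm_bound_def by simp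
    moreover have "(T' ^\<^sub>m k) $$ (idx a, idx b) = complex_of_real ((1/r)^k * mpow M k $ a $ b)"
      unfolding T'_def smult_pow_mat[OF T] to_mat_pow[symmetric] cmat_mpow[symmetric]
      by (simp add: to_mat_index cmat_def)
    ultimately have "(1/r)^k * \<bar>mpow M k $ a $ b\<bar> \<le> c"
      using r0 by (simp add: norm_mult norm_power norm_divide abs_mult)
    thus ?thesis using r0 by (simp add: field_simps)
  qed
  have "norm (mpow M k *v y) \<le> (real CARD('n) * real CARD('n) * c) * r^k * norm y" for k y
  proof -
    have "norm (mpow M k *v y) \<le> (\<Sum>a\<in>UNIV. \<bar>(mpow M k *v y) $ a\<bar>)" by (rule norm_le_l1_cart)
    also have "\<dots> \<le> (\<Sum>a\<in>(UNIV::'n set). \<Sum>b\<in>(UNIV::'n set). c * r^k * norm y)"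
    proof (rule sum_mono)
      fix a
      have "\<bar>(mpow M k *v y) $ a\<bar> \<le> (\<Sum>b\<in>UNIV. \<bar>mpow M k $ a $ b * y $ b\<bar>)"
        unfolding matrix_vector_mult_def by (simp add: sum_abs)
      also have "\<dots> \<le> (\<Sum>b\<in>(UNIV::'n set). c * r^k * norm y)"
      proof (rule sum_mono)
        fix b
        show "\<bar>mpow M k $ a $ b * y $ b\<bar> \<le> c * r^k * norm y"
          unfolding abs_mult
          by (rule mult_mono[OF ent component_le_norm_cart]) (use ent[of k a b] in auto)
      qed
      finally show "\<bar>(mpow M k *v y) $ a\<bar> \<le> (\<Sum>b\<in>(UNIV::'n set). c * r^k * norm y)" .
    qed
    also have "\<dots> = (real CARD('n) * real CARD('n) * c) * r^k * norm y" by simp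
    finally show ?thesis .
  qed
  with r0 r1 show ?thesis by blast
qed


(* ---------- generic helpers ---------- *)

definition proj :: "('c \<Rightarrow> 'm) \<Rightarrow> 'm \<Rightarrow> real^'c \<Rightarrow> real^'c" where
  "proj s i x = (\<chi> r. if s r = i then x $ r else 0)"

lemma proj_nth: "proj s i x $ r = (if s r = i then x $ r else 0)"
  by (simp add: proj_def)

lemma proj_add: "proj s i (x + y) = proj s i x + proj s i y"
  by (simp add: Finite_Cartesian_Product.vec_eq_iff proj_nth)

lemma proj_diff: "proj s i (x - y) = proj s i x - proj s i y"
  by (simp add: Finite_Cartesian_Product.vec_eq_iff proj_nth)

lemma proj_scale: "proj s i (c *\<^sub>R x) = c *\<^sub>R proj s i x"
  by (simp add: Finite_Cartesian_Product.vec_eq_iff proj_nth)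

lemma proj_zero[simp]: "proj s i 0 = 0"
  by (simp add: Finite_Cartesian_Product.vec_eq_iff proj_nth)

lemma proj_sum: "proj s i (sum f S) = (\<Sum>j\<in>S. proj s i (f j))"
  by (simp add: Finite_Cartesian_Product.vec_eq_iff proj_nth sum_component)

lemma proj_loc: "proj s i x \<in> loc_space s i"
  by (simp add: loc_space_def proj_nth)

lemma loc_proj: "x \<in> loc_space s i \<Longrightarrow> proj s i x = x"
  by (simp add: loc_space_def Finite_Cartesian_Product.vec_eq_iff proj_nth)

lemma norm_proj: "norm (proj s i x) \<le> norm x"
  by (rule norm_le_componentwise_cart) (simp add: proj_nth)

lemma loc_scale: "x \<in> loc_space s i \<Longrightarrow> c *\<^sub>R x \<in> loc_space s i"
  by (simp add: loc_space_def)

lemma mv_scale: "(M::real^'c^'r) *v (c *\<^sub>R x) = c *\<^sub>R (M *v x)"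
  by (metis scalar_mult_eq_scaleR vec.scale)

lemma blk_decomp:
  fixes M :: "real^'c^'r" and sr :: "'r \<Rightarrow> 'm::finite" and sc :: "'c \<Rightarrow> 'm"
  assumes "\<forall>r c. sr r = i \<longrightarrow> M $ r $ c \<noteq> 0 \<longrightarrow> sc c \<in> T"
  shows "proj sr i (M *v x) = (\<Sum>j\<in>T. blk sr sc i j M *v proj sc j x)"
proof -
  have "proj sr i (M *v x) $ r = (\<Sum>j\<in>T. blk sr sc i j M *v proj sc j x) $ r" for r
  proof (cases "sr r = i")
    case True
    have "(\<Sum>j\<in>T. blk sr sc i j M *v proj sc j x) $ r
        = (\<Sum>j\<in>T. \<Sum>c\<in>UNIV. if sc c = j then M $ r $ c * x $ c else 0)"
      using True by (simp add: sum_component matrix_vector_mult_def blk_def proj_nth if_distrib cong: if_cong)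
    also have "\<dots> = (\<Sum>c\<in>UNIV. \<Sum>j\<in>T. if sc c = j then M $ r $ c * x $ c else 0)"
      by (rule sum.swap)
    also have "\<dots> = (\<Sum>c\<in>UNIV. if sc c \<in> T then M $ r $ c * x $ c else 0)"
      by (simp add: sum.delta)
    also have "\<dots> = (\<Sum>c\<in>UNIV. M $ r $ c * x $ c)"
      using assms True by (intro sum.cong) auto
    finally show ?thesis using True by (simp add: proj_nth matrix_vector_mult_def)
  next
    case False
    thus ?thesis by (simp add: sum_component matrix_vector_mult_def blk_def proj_nth)
  qed
  thus ?thesis by (simp add: Finite_Cartesian_Product.vec_eq_iff)
qed

lemma blk_rows: "sr r \<noteq> i \<Longrightarrow> (blk sr sc i j M *v x) $ r = 0"
  by (simp add: blk_def matrix_vector_mult_def)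

lemma blk_loc: "blk sr sc i j M *v x \<in> loc_space sr i"
  by (simp add: loc_space_def blk_rows)

lemma norm_mv: "norm ((M::real^'c::finite^'r::finite) *v y) \<le> (\<Sum>a\<in>UNIV. \<Sum>b\<in>UNIV. \<bar>M $ a $ b\<bar>) * norm y"
proof -
  have "norm (M *v y) \<le> (\<Sum>a\<in>UNIV. \<bar>(M *v y) $ a\<bar>)" by (rule norm_le_l1_cart)
  also have "\<dots> \<le> (\<Sum>a\<in>UNIV. \<Sum>b\<in>UNIV. \<bar>M $ a $ b\<bar> * norm y)"
  proof (rule sum_mono)
    fix a
    have "\<bar>(M *v y) $ a\<bar> \<le> (\<Sum>b\<in>UNIV. \<bar>M $ a $ b * y $ b\<bar>)"
      unfolding matrix_vector_mult_def by (simp add: sum_abs)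
    also have "\<dots> \<le> (\<Sum>b\<in>UNIV. \<bar>M $ a $ b\<bar> * norm y)"
      by (rule sum_mono) (simp add: abs_mult mult_left_mono component_le_norm_cart)
    finally show "\<bar>(M *v y) $ a\<bar> \<le> (\<Sum>b\<in>UNIV. \<bar>M $ a $ b\<bar> * norm y)" .
  qed
  also have "\<dots> = (\<Sum>a\<in>UNIV. \<Sum>b\<in>UNIV. \<bar>M $ a $ b\<bar>) * norm y"
    by (simp add: sum_distrib_right)
  finally show ?thesis .
qed

lemma unif_pos:
  fixes P :: "'m::finite \<Rightarrow> real \<Rightarrow> bool"
  assumes "\<forall>i. \<exists>e>0. \<forall>t. 0 < t \<and> t \<le> e \<longrightarrow> P i t"
  shows "\<exists>e>0. \<forall>i. P i e"
proof -
  from assms obtain f where f: "\<And>i. f i > 0" "\<And>i t. 0 < t \<Longrightarrow> t \<le> f i \<Longrightarrow> P i t" by metis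
  define e where "e = Min (range f)"
  have "e \<in> range f" unfolding e_def by (rule Min_in) auto
  hence "e > 0" using f(1) by auto
  moreover have "e \<le> f i" for i unfolding e_def by (rule Min_le) auto
  ultimately show ?thesis using f(2) by blast
qed

lemma unif_nat:
  fixes P :: "'m::finite \<Rightarrow> nat \<Rightarrow> bool"
  assumes "\<forall>i. \<exists>N. \<forall>n\<ge>N. P i n"
  shows "\<exists>N. \<forall>i. \<forall>n\<ge>N. P i n"
proof -
  from assms obtain f where f: "\<And>i n. n \<ge> f i \<Longrightarrow> P i n" by metis
  have "f i \<le> Max (range f)" for i by (rule Max_ge) auto
  thus ?thesis using f by (meson order_trans)
qed

lemma unif_bound:
  fixes S :: "'m::finite \<Rightarrow> 'a::real_normed_vector set"
  assumes "\<forall>i. bounded (S i)"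
  shows "\<exists>R>0. \<forall>i. \<forall>z\<in>S i. norm z \<le> R"
proof -
  from assms have "\<forall>i. \<exists>R. \<forall>z\<in>S i. norm z \<le> R" by (simp add: bounded_iff)
  then obtain f where f: "\<And>i z. z \<in> S i \<Longrightarrow> norm z \<le> f i" by metis
  define R where "R = max (Max (range f)) 0 + 1"
  have "f i \<le> Max (range f)" for i by (rule Max_ge) auto
  hence "\<forall>i. \<forall>z\<in>S i. norm z \<le> R" using f unfolding R_def by (smt (verit))
  moreover have "R > 0" unfolding R_def by simp
  ultimately show ?thesis by blast
qed

lemma local_C_zero: "local_C_set s i S \<Longrightarrow> 0 \<in> S"
  unfolding local_C_set_def loc_space_def by auto

lemma cmat_ri: "cmat (M::real^'c::finite^'r::finite) *v (\<chi> c. complex_of_real (a$c) + \<i> * complex_of_real (b$c))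
   = (\<chi> r. complex_of_real ((M *v a)$r) + \<i> * complex_of_real ((M *v b)$r))"
  by (simp add: Finite_Cartesian_Product.vec_eq_iff cmat_def matrix_vector_mult_def sum.distrib sum_distrib_left algebra_simps)

locale setting =
  fixes A :: "real^'n^'n" and B :: "real^'p^'n" and K :: "real^'n^'p"
    and sx :: "'n \<Rightarrow> 'm::finite" and su :: "'p \<Rightarrow> 'm"
    and N :: "'m \<Rightarrow> 'm set"
    and X Z Xh :: "'m \<Rightarrow> (real^'n) set" and U Uh :: "'m \<Rightarrow> (real^'p) set"
  assumes nbr: "\<forall>i. i \<notin> N i"
    and A_struct: "\<forall>r c. A $ r $ c \<noteq> 0 \<longrightarrow> sx c \<in> N (sx r) \<union> {sx r}"
    and B_struct: "\<forall>r c. B $ r $ c \<noteq> 0 \<longrightarrow> su c \<in> N (sx r) \<union> {sx r}"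
    and K_diag: "\<forall>r c. K $ r $ c \<noteq> 0 \<longrightarrow> su r = sx c"
    and X_set: "\<forall>i. local_C_set sx i (X i)"
    and U_set: "\<forall>i. local_C_set su i (U i)"
    and F_schur: "\<forall>i. schur (blk sx sx i i A + blk sx su i i B ** blk su sx i i K)"
    and Z_set: "\<forall>i. local_C_set sx i (Z i)"
    and Z_inv: "\<forall>i. msum ((\<lambda>x. (blk sx sx i i A + blk sx su i i B ** blk su sx i i K) *v x) ` Z i)
                        (wset A B sx su N X U i) \<subseteq> Z i"
    and Xh_set: "\<forall>i. local_C_set sx i (Xh i)"
    and Uh_set: "\<forall>i. local_C_set su i (Uh i)"
    and Xh_sub: "\<forall>i. Xh i \<subseteq> pdiff (X i) (Z i)"
    and Uh_sub: "\<forall>i. Uh i \<subseteq> pdiff (U i) ((\<lambda>x. blk su sx i i K *v x) ` Z i)"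
begin

definition Fd where "Fd i = blk sx sx i i A + blk sx su i i B ** blk su sx i i K"

lemma Fd_split: "Fd i *v y = blk sx sx i i A *v y + blk sx su i i B *v (blk su sx i i K *v y)"
  by (simp add: Fd_def matrix_vector_mult_add_rdistrib matrix_vector_mul_assoc)

lemma Fd_rows: "sx r \<noteq> i \<Longrightarrow> (Fd i *v y) $ r = 0"
  by (simp add: Fd_split blk_rows)

lemma proj_Fd: "proj sx i (Fd j *v y) = (if i = j then Fd j *v y else 0)"
  by (auto simp: Finite_Cartesian_Product.vec_eq_iff proj_nth Fd_rows)

definition Off where
  "Off i x = (\<Sum>j\<in>N i. blk sx sx i j A *v proj sx j x + blk sx su i j B *v (blk su sx j j K *v proj sx j x))"

lemma KI: "proj sx i ((A + B ** K) *v x) = Fd i *v proj sx i x + Off i x"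
proof -
  have fin: "finite (N i)" by simp
  have ni: "i \<notin> N i" using nbr by simp
  have pA: "proj sx i (A *v x) = (\<Sum>j\<in>insert i (N i). blk sx sx i j A *v proj sx j x)"
    by (rule blk_decomp) (use A_struct in auto)
  have pB: "proj sx i (B *v u) = (\<Sum>j\<in>insert i (N i). blk sx su i j B *v proj su j u)" for u
    by (rule blk_decomp) (use B_struct in auto)
  have pK: "proj su j (K *v x) = blk su sx j j K *v proj sx j x" for j
  proof -
    have "proj su j (K *v x) = (\<Sum>j'\<in>{j}. blk su sx j j' K *v proj sx j' x)"
      by (rule blk_decomp) (use K_diag in auto)
    thus ?thesis by simp
  qed
  have "proj sx i ((A + B ** K) *v x) = proj sx i (A *v x) + proj sx i (B *v (K *v x))"
    by (simp add: matrix_vector_mult_add_rdistrib matrix_vector_mul_assoc proj_add)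
  also have "\<dots> = (blk sx sx i i A *v proj sx i x + blk sx su i i B *v (blk su sx i i K *v proj sx i x)) + Off i x"
    unfolding pA pB pK Off_def using fin ni by (simp add: sum.distrib algebra_simps)
  also have "\<dots> = Fd i *v proj sx i x + Off i x" by (simp add: Fd_split)
  finally show ?thesis .
qed

definition Zg where "Zg = {x. \<forall>i. proj sx i x \<in> Z i}"

definition D where "D x = (\<Sum>i\<in>UNIV. Fd i *v proj sx i x)"

lemma proj_D: "proj sx i (D x) = Fd i *v proj sx i x"
  by (simp add: D_def proj_sum proj_Fd)

lemma D_lin: "D (a *\<^sub>R u + b *\<^sub>R v) = a *\<^sub>R D u + b *\<^sub>R D v"
  by (simp add: D_def proj_add proj_scale vec.add mv_scale sum.distrib scaleR_sum_right)

definition Og where "Og x = (A + B ** K) *v x - D x"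

lemma proj_Og: "proj sx i (Og x) = Off i x"
  by (simp add: Og_def proj_diff KI proj_D)

lemma zero_Zg: "0 \<in> Zg"
  using local_C_zero[OF Z_set[rule_format]] by (simp add: Zg_def)

lemma cvx:
  assumes "y1 \<in> Zg" "y2 \<in> Zg" "0 \<le> a" "0 \<le> b"
  shows "\<exists>y\<in>Zg. a *\<^sub>R y1 + b *\<^sub>R y2 = (a + b) *\<^sub>R y"
proof (cases "a + b = 0")
  case True
  hence "a = 0" "b = 0" using assms by auto
  thus ?thesis using zero_Zg by auto
next
  case False
  hence ab: "a + b > 0" using assms by auto
  define y where "y = (a/(a+b)) *\<^sub>R y1 + (b/(a+b)) *\<^sub>R y2"
  have "y \<in> Zg" unfolding Zg_def
  proof (intro CollectI allI)
    fix i
    have cv: "convex (Z i)" using Z_set unfolding local_C_set_def by simp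
    have "(a/(a+b)) *\<^sub>R proj sx i y1 + (b/(a+b)) *\<^sub>R proj sx i y2 \<in> Z i"
      by (rule convexD[OF cv]) (use assms ab in \<open>auto simp: Zg_def add_divide_distrib[symmetric]\<close>)
    thus "proj sx i y \<in> Z i" by (simp add: y_def proj_add proj_scale)
  qed
  moreover have "a *\<^sub>R y1 + b *\<^sub>R y2 = (a + b) *\<^sub>R y"
    using ab by (simp add: y_def scaleR_add_right)
  ultimately show ?thesis by blast
qed

lemma D_Z: assumes "x \<in> Zg" shows "D x \<in> Zg"
  unfolding Zg_def
proof (intro CollectI allI)
  fix i
  have "0 \<in> wset A B sx su N X U i"
  proof -
    have "\<forall>j\<in>N i. (0::real^'n) \<in> X j \<and> (0::real^'p) \<in> U j"
      using local_C_zero[OF X_set[rule_format]] local_C_zero[OF U_set[rule_format]] by blast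
    thus ?thesis unfolding wset_def
      by (intro CollectI exI[where x="\<lambda>_::'m. 0::real^'n"] exI[where x="\<lambda>_::'m. 0::real^'p"]) auto
  qed
  moreover have "Fd i *v proj sx i x \<in> (\<lambda>x. Fd i *v x) ` Z i" using assms by (simp add: Zg_def)
  ultimately have "Fd i *v proj sx i x + 0 \<in> Z i"
    using Z_inv unfolding msum_def Fd_def by blast
  thus "proj sx i (D x) \<in> Z i" by (simp add: proj_D)
qed

definition good where
  "good d \<longleftrightarrow> d > 0 \<and> (\<forall>j. \<forall>z\<in>Z j. (1+d) *\<^sub>R z \<in> X j \<and> (1+d) *\<^sub>R (blk su sx j j K *v z) \<in> U j)"

definition G where "G d x = D x + (1+d) *\<^sub>R Og x"

lemma G_Z: assumes "good d" "x \<in> Zg" shows "G d x \<in> Zg"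
  unfolding Zg_def
proof (intro CollectI allI)
  fix i
  define xf where "xf j = (1+d) *\<^sub>R proj sx j x" for j
  define uf where "uf j = (1+d) *\<^sub>R (blk su sx j j K *v proj sx j x)" for j
  have "(1+d) *\<^sub>R Off i x \<in> wset A B sx su N X U i"
  proof -
    have "(1+d) *\<^sub>R Off i x = (\<Sum>j\<in>N i. blk sx sx i j A *v xf j + blk sx su i j B *v uf j)"
      by (simp add: Off_def xf_def uf_def scaleR_sum_right scaleR_add_right mv_scale)
    moreover have "\<forall>j\<in>N i. xf j \<in> X j \<and> uf j \<in> U j"
      using assms unfolding good_def Zg_def xf_def uf_def by blast
    ultimately show ?thesis unfolding wset_def by blast
  qed
  moreover have "Fd i *v proj sx i x \<in> (\<lambda>x. Fd i *v x) ` Z i" using assms by (simp add: Zg_def)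
  ultimately have "Fd i *v proj sx i x + (1+d) *\<^sub>R Off i x \<in> Z i"
    using Z_inv unfolding msum_def Fd_def by blast
  thus "proj sx i (G d x) \<in> Z i" by (simp add: G_def proj_add proj_scale proj_D proj_Og)
qed

lemma F_split:
  assumes "d > 0"
  shows "(A + B ** K) *v x = (d/(1+d)) *\<^sub>R D x + (1 - d/(1+d)) *\<^sub>R G d x"
proof -
  have e: "(1 - d/(1+d)) * (1+d) = 1" using assms by (simp add: field_simps)
  define a where "a = d/(1+d)"
  have g: "(1 - a) *\<^sub>R G d x = (1-a) *\<^sub>R D x + ((1-a)*(1+d)) *\<^sub>R Og x"
    by (simp add: G_def scaleR_add_right)
  have h: "a *\<^sub>R D x + (1-a) *\<^sub>R D x = D x"
    using scaleR_add_left[of a "1-a" "D x"] by simp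
  have "(d/(1+d)) *\<^sub>R D x + (1 - d/(1+d)) *\<^sub>R G d x
      = (a *\<^sub>R D x + (1-a) *\<^sub>R D x) + ((1 - d/(1+d)) * (1+d)) *\<^sub>R Og x"
    unfolding g[unfolded a_def] a_def by (simp add: algebra_simps)
  also have "\<dots> = D x + Og x" using e h by simp
  also have "\<dots> = (A + B ** K) *v x" by (simp add: Og_def)
  finally show ?thesis by simp
qed


lemma good_ex: "\<exists>d. good d"
proof -
  have "\<forall>j. \<exists>e>0. \<forall>t. 0 < t \<and> t \<le> e \<longrightarrow>
     (\<forall>z\<in>Z j. (1+t) *\<^sub>R z \<in> X j \<and> (1+t) *\<^sub>R (blk su sx j j K *v z) \<in> U j)"
  proof
    fix j
    from Xh_set obtain e1 where e1: "e1 > 0" "cball 0 e1 \<inter> loc_space sx j \<subseteq> Xh j"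
      unfolding local_C_set_def by blast
    from Uh_set obtain e2 where e2: "e2 > 0" "cball 0 e2 \<inter> loc_space su j \<subseteq> Uh j"
      unfolding local_C_set_def by blast
    have Zj: "compact (Z j)" "Z j \<subseteq> loc_space sx j" using Z_set unfolding local_C_set_def by auto
    obtain R where R: "R > 0" "\<forall>z\<in>Z j. norm z \<le> R"
      using bounded_pos compact_imp_bounded[OF Zj(1)] by blast
    define Kj where "Kj = blk su sx j j K"
    define Kc where "Kc = (\<Sum>a\<in>UNIV. \<Sum>b\<in>UNIV. \<bar>Kj $ a $ b\<bar>) + 1"
    have Kc0: "Kc > 0" unfolding Kc_def by (smt (verit) abs_ge_zero sum_nonneg)
    have Kb: "norm (Kj *v z) \<le> Kc * norm z" for z
      using norm_mv[of Kj z] unfolding Kc_def by (smt (verit) mult_right_mono norm_ge_zero)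
    define e where "e = min (e1/R) (e2/(Kc*R))"
    have "e > 0" using e1 e2 R Kc0 by (simp add: e_def)
    moreover have "(\<forall>z\<in>Z j. (1+t) *\<^sub>R z \<in> X j \<and> (1+t) *\<^sub>R (Kj *v z) \<in> U j)"
      if t: "0 < t" "t \<le> e" for t
    proof
      fix z assume z: "z \<in> Z j"
      have nz: "norm z \<le> R" using R z by auto
      have "t * norm z \<le> (e1/R) * R"
        by (rule mult_mono) (use t nz R in \<open>auto simp: e_def\<close>)
      hence n1: "norm (t *\<^sub>R z) \<le> e1" using R t by simp
      have "t * (Kc * norm z) \<le> (e2/(Kc*R)) * (Kc * R)"
        by (rule mult_mono) (use t nz R Kc0 in \<open>auto simp: e_def\<close>)
      hence "t * norm (Kj *v z) \<le> e2" using R Kc0 Kb[of z] t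
        by (smt (verit, ccfv_SIG) mult_left_mono nonzero_eq_divide_eq mult_eq_0_iff)
      hence n2: "norm (t *\<^sub>R (Kj *v z)) \<le> e2" using t by simp
      have "t *\<^sub>R z \<in> cball 0 e1 \<inter> loc_space sx j"
        using n1 loc_scale[of z sx j t] Zj(2) z by auto
      hence "t *\<^sub>R z \<in> Xh j" using e1(2) by blast
      hence "t *\<^sub>R z + z \<in> X j" using Xh_sub z unfolding pdiff_def by blast
      moreover have "t *\<^sub>R (Kj *v z) \<in> cball 0 e2 \<inter> loc_space su j"
        using n2 loc_scale[OF blk_loc] unfolding Kj_def by auto
      hence "t *\<^sub>R (Kj *v z) \<in> Uh j" using e2(2) by blast
      hence "t *\<^sub>R (Kj *v z) + Kj *v z \<in> U j" using Uh_sub z unfolding pdiff_def Kj_def by blast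
      ultimately show "(1+t) *\<^sub>R z \<in> X j \<and> (1+t) *\<^sub>R (Kj *v z) \<in> U j"
        by (simp add: scaleR_add_left add.commute)
    qed
    ultimately show "\<exists>e>0. \<forall>t. 0 < t \<and> t \<le> e \<longrightarrow>
     (\<forall>z\<in>Z j. (1+t) *\<^sub>R z \<in> X j \<and> (1+t) *\<^sub>R (blk su sx j j K *v z) \<in> U j)"
      unfolding Kj_def by blast
  qed
  from unif_pos[OF this] show ?thesis unfolding good_def by blast
qed

abbreviation Fm where "Fm \<equiv> (*v) (A + B ** K)"

lemma D_pow_Z: "x \<in> Zg \<Longrightarrow> (D ^^ n) x \<in> Zg"
  by (induction n) (simp_all add: D_Z)

lemma proj_D_pow: "proj sx i ((D ^^ n) x) = (((*v) (Fd i)) ^^ n) (proj sx i x)"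
  by (induction n) (simp_all add: proj_D)

lemma IND:
  assumes d: "good d" and x: "x \<in> Zg"
  shows "\<exists>y\<in>Zg. (Fm ^^ n) x = (d/(1+d))^n *\<^sub>R (D ^^ n) x + (1 - (d/(1+d))^n) *\<^sub>R y"
proof (induction n)
  case 0 thus ?case using x by auto
next
  case (Suc n)
  define a where "a = d/(1+d)"
  have d0: "d > 0" using d by (simp add: good_def)
  have a0: "0 \<le> a" "a \<le> 1" using d0 by (auto simp: a_def)
  from Suc obtain y where y: "y \<in> Zg" "(Fm ^^ n) x = a^n *\<^sub>R (D ^^ n) x + (1 - a^n) *\<^sub>R y"
    unfolding a_def by blast
  define w where "w = (Fm ^^ n) x"
  have an: "0 \<le> a^n" "a^n \<le> 1" using a0 by (auto simp: power_le_one)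
  have "w \<in> Zg"
  proof -
    from cvx[OF D_pow_Z[OF x] y(1), of "a^n" "1 - a^n"] an
    obtain y' where "y' \<in> Zg" "a^n *\<^sub>R (D ^^ n) x + (1 - a^n) *\<^sub>R y = y'" by auto
    thus ?thesis using y(2) unfolding w_def by simp
  qed
  hence Gw: "G d w \<in> Zg" by (rule G_Z[OF d])
  have Dy: "D y \<in> Zg" by (rule D_Z[OF y(1)])
  have c1: "0 \<le> a * (1 - a^n)" "0 \<le> 1 - a" using a0 an by auto
  from cvx[OF Dy Gw c1] obtain y'' where y'': "y'' \<in> Zg"
    "(a * (1 - a^n)) *\<^sub>R D y + (1 - a) *\<^sub>R G d w = (a * (1 - a^n) + (1 - a)) *\<^sub>R y''" by blast
  have coef: "a * (1 - a^n) + (1 - a) = 1 - a^Suc n" by (simp add: algebra_simps)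
  have "(Fm ^^ Suc n) x = Fm w" by (simp add: w_def)
  also have "\<dots> = a *\<^sub>R D w + (1 - a) *\<^sub>R G d w" unfolding a_def by (rule F_split[OF d0])
  also have "D w = a^n *\<^sub>R (D ^^ Suc n) x + (1 - a^n) *\<^sub>R D y"
    using y(2) unfolding w_def by (simp add: D_lin)
  also have "a *\<^sub>R (a^n *\<^sub>R (D ^^ Suc n) x + (1 - a^n) *\<^sub>R D y) + (1 - a) *\<^sub>R G d w
      = a^Suc n *\<^sub>R (D ^^ Suc n) x + ((a * (1 - a^n)) *\<^sub>R D y + (1 - a) *\<^sub>R G d w)"
    by (simp add: scaleR_add_right)
  also have "\<dots> = a^Suc n *\<^sub>R (D ^^ Suc n) x + (1 - a^Suc n) *\<^sub>R y''"
    unfolding y''(2) coef by simp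
  finally show ?case using y''(1) unfolding a_def by blast
qed

lemma Fm_pow_scale: "(Fm ^^ k) (c *\<^sub>R x) = c *\<^sub>R (Fm ^^ k) x"
  by (simp add: funpow_mpow mv_scale)

lemma Fd_pow_loc: "n \<ge> 1 \<Longrightarrow> (((*v) (Fd i)) ^^ n) y \<in> loc_space sx i"
  by (cases n) (auto simp: loc_space_def Fd_rows)

lemma N_ex: "\<exists>Nn. Nn \<ge> 1 \<and> (\<forall>i. \<forall>z\<in>Z i. 2 *\<^sub>R (((*v) (Fd i)) ^^ Nn) z \<in> Z i)"
proof -
  have "\<forall>i. \<exists>N0. \<forall>n\<ge>N0. n \<ge> 1 \<and> (\<forall>z\<in>Z i. 2 *\<^sub>R (((*v) (Fd i)) ^^ n) z \<in> Z i)"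
  proof
    fix i
    from decay[of "Fd i"] F_schur obtain C r where Cr: "0 < r" "r < 1"
      "\<And>k y. norm (mpow (Fd i) k *v y) \<le> C * r^k * norm y" unfolding Fd_def by blast
    from Z_set obtain e where e: "e > 0" "cball 0 e \<inter> loc_space sx i \<subseteq> Z i"
      unfolding local_C_set_def by blast
    have Zi: "compact (Z i)" using Z_set unfolding local_C_set_def by auto
    obtain R where R: "R > 0" "\<forall>z\<in>Z i. norm z \<le> R"
      using bounded_pos compact_imp_bounded[OF Zi] by blast
    define C' where "C' = \<bar>C\<bar> + 1"
    have C'0: "C' > 0" by (simp add: C'_def)
    obtain n0 where n0: "r^n0 < e / (2 * C' * R)"
      using real_arch_pow_inv[of "e / (2 * C' * R)" r] e R C'0 Cr by auto
    have "\<forall>n\<ge>max n0 1. n \<ge> 1 \<and> (\<forall>z\<in>Z i. 2 *\<^sub>R (((*v) (Fd i)) ^^ n) z \<in> Z i)"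
    proof (intro allI impI conjI)
      fix n assume n: "n \<ge> max n0 1"
      show "n \<ge> 1" using n by simp
      show "\<forall>z\<in>Z i. 2 *\<^sub>R (((*v) (Fd i)) ^^ n) z \<in> Z i"
      proof
      fix z assume z: "z \<in> Z i"
      have rn: "r^n \<le> r^n0" using n Cr by (intro power_decreasing) auto
      have "norm (mpow (Fd i) n *v z) \<le> C * r^n * norm z" by (rule Cr(3))
      also have "\<dots> \<le> C' * r^n0 * R"
      proof -
        have "C * (r^n * norm z) \<le> \<bar>C\<bar> * (r^n * norm z)"
          by (rule mult_right_mono) (use Cr(1) in auto)
        moreover have "r^n * norm z \<le> r^n0 * R"
          by (rule mult_mono) (use rn R z Cr(1) in auto)
        moreover have "\<bar>C\<bar> * (r^n * norm z) \<le> C' * (r^n0 * R)"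
          by (rule mult_mono) (use calculation(2) Cr(1) in \<open>auto simp: C'_def\<close>)
        ultimately show ?thesis by (simp add: mult.assoc)
      qed
      also have "\<dots> \<le> C' * (e / (2 * C' * R)) * R"
        using n0 C'0 R by (intro mult_right_mono mult_left_mono) auto
      also have "\<dots> = e / 2" using C'0 R by (simp add: field_simps)
      finally have "norm (2 *\<^sub>R (((*v) (Fd i)) ^^ n) z) \<le> e"
        by (simp add: funpow_mpow)
      moreover have "2 *\<^sub>R (((*v) (Fd i)) ^^ n) z \<in> loc_space sx i"
        using Fd_pow_loc[of n i z] n by (intro loc_scale) auto
      ultimately show "2 *\<^sub>R (((*v) (Fd i)) ^^ n) z \<in> Z i" using e(2) by auto
      qed
    qed
    thus "\<exists>N0. \<forall>n\<ge>N0. n \<ge> 1 \<and> (\<forall>z\<in>Z i. 2 *\<^sub>R (((*v) (Fd i)) ^^ n) z \<in> Z i)" by blast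
  qed
  from unif_nat[OF this] obtain N0 where
    "\<forall>i. \<forall>n\<ge>N0. n \<ge> 1 \<and> (\<forall>z\<in>Z i. 2 *\<^sub>R (((*v) (Fd i)) ^^ n) z \<in> Z i)" by blast
  thus ?thesis by blast
qed


lemma RHO: "\<exists>Nn rho. 0 < rho \<and> rho < 1 \<and> (\<forall>x\<in>Zg. \<forall>m. \<exists>y\<in>Zg. (Fm ^^ (Nn * m)) x = rho^m *\<^sub>R y)"
proof -
  obtain d where d: "good d" using good_ex by blast
  have d0: "d > 0" using d by (simp add: good_def)
  define a where "a = d/(1+d)"
  have a0: "0 < a" "a < 1" using d0 by (auto simp: a_def)
  obtain Nn where Nn: "Nn \<ge> 1" "\<And>i z. z \<in> Z i \<Longrightarrow> 2 *\<^sub>R (((*v) (Fd i)) ^^ Nn) z \<in> Z i"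
    using N_ex by blast
  define rho where "rho = 1 - a^Nn / 2"
  have aN: "0 < a^Nn" "a^Nn \<le> 1" using a0 by (auto simp: power_le_one)
  have rho: "0 < rho" "rho < 1" using aN by (auto simp: rho_def)
  have step: "\<exists>y\<in>Zg. (Fm ^^ Nn) x = rho *\<^sub>R y" if x: "x \<in> Zg" for x
  proof -
    from IND[OF d x, of Nn] obtain y where y: "y \<in> Zg"
      "(Fm ^^ Nn) x = a^Nn *\<^sub>R (D ^^ Nn) x + (1 - a^Nn) *\<^sub>R y" unfolding a_def by blast
    define w where "w = 2 *\<^sub>R (D ^^ Nn) x"
    have w: "w \<in> Zg" unfolding Zg_def
    proof (intro CollectI allI)
      fix i
      have "proj sx i x \<in> Z i" using x by (simp add: Zg_def)
      thus "proj sx i w \<in> Z i" using Nn(2) by (simp add: w_def proj_scale proj_D_pow)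
    qed
    have "(Fm ^^ Nn) x = (a^Nn / 2) *\<^sub>R w + (1 - a^Nn) *\<^sub>R y"
      using y(2) by (simp add: w_def)
    moreover from cvx[OF w y(1), of "a^Nn/2" "1 - a^Nn"] aN obtain y' where
      "y' \<in> Zg" "(a^Nn / 2) *\<^sub>R w + (1 - a^Nn) *\<^sub>R y = (a^Nn/2 + (1 - a^Nn)) *\<^sub>R y'" by auto
    moreover have "a^Nn/2 + (1 - a^Nn) = rho" by (simp add: rho_def)
    ultimately show ?thesis by auto
  qed
  have "\<exists>y\<in>Zg. (Fm ^^ (Nn * m)) x = rho^m *\<^sub>R y" if x: "x \<in> Zg" for x m
  proof (induction m)
    case 0 thus ?case using x by auto
  next
    case (Suc m)
    then obtain y where y: "y \<in> Zg" "(Fm ^^ (Nn * m)) x = rho^m *\<^sub>R y" by blast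
    from step[OF y(1)] obtain y' where y': "y' \<in> Zg" "(Fm ^^ Nn) y = rho *\<^sub>R y'" by blast
    have "(Fm ^^ (Nn * Suc m)) x = (Fm ^^ Nn) ((Fm ^^ (Nn * m)) x)"
      by (simp add: funpow_add)
    also have "\<dots> = rho^Suc m *\<^sub>R y'" using y y' by (simp add: Fm_pow_scale)
    finally show ?case using y' by blast
  qed
  with rho show ?thesis by blast
qed

lemma Zg_bounded: "\<exists>R. \<forall>y\<in>Zg. norm y \<le> R"
proof -
  have "\<forall>i. bounded (Z i)" using Z_set unfolding local_C_set_def by (auto intro: compact_imp_bounded)
  from unif_bound[OF this] obtain R where R: "\<forall>i. \<forall>z\<in>Z i. norm z \<le> R" by blast
  have "norm y \<le> real CARD('n) * R" if y: "y \<in> Zg" for y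
  proof -
    have "norm y \<le> (\<Sum>r\<in>UNIV. \<bar>y $ r\<bar>)" by (rule norm_le_l1_cart)
    also have "\<dots> \<le> (\<Sum>r\<in>(UNIV::'n set). R)"
    proof (rule sum_mono)
      fix r
      have "\<bar>y $ r\<bar> = \<bar>proj sx (sx r) y $ r\<bar>" by (simp add: proj_nth)
      also have "\<dots> \<le> norm (proj sx (sx r) y)" by (rule component_le_norm_cart)
      also have "\<dots> \<le> R" using R y unfolding Zg_def by blast
      finally show "\<bar>y $ r\<bar> \<le> R" .
    qed
    finally show ?thesis by simp
  qed
  thus ?thesis by blast
qed

lemma Zg_absorb: "\<exists>t>0. t *\<^sub>R x \<in> Zg"
proof -
  have "\<forall>i. \<exists>e>0. \<forall>t. 0 < t \<and> t \<le> e \<longrightarrow> (\<forall>z\<in>loc_space sx i. norm z \<le> t \<longrightarrow> z \<in> Z i)"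
  proof
    fix i
    from Z_set obtain e where e: "e > 0" "cball 0 e \<inter> loc_space sx i \<subseteq> Z i"
      unfolding local_C_set_def by blast
    thus "\<exists>e>0. \<forall>t. 0 < t \<and> t \<le> e \<longrightarrow> (\<forall>z\<in>loc_space sx i. norm z \<le> t \<longrightarrow> z \<in> Z i)"
      by (intro exI[of _ e]) auto
  qed
  from unif_pos[OF this] obtain e where e: "e > 0"
    "\<And>i z. z \<in> loc_space sx i \<Longrightarrow> norm z \<le> e \<Longrightarrow> z \<in> Z i" by blast
  define t where "t = e / (norm x + 1)"
  have nx: "norm x + 1 > 0" using norm_ge_zero[of x] by linarith
  have t0: "t > 0" using e nx by (simp add: t_def)
  have "t *\<^sub>R x \<in> Zg" unfolding Zg_def
  proof (intro CollectI allI)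
    fix i
    have "norm (proj sx i (t *\<^sub>R x)) \<le> norm (t *\<^sub>R x)" by (rule norm_proj)
    also have "\<dots> = t * norm x" using t0 by simp
    also have "\<dots> \<le> t * (norm x + 1)" using t0 by simp
    also have "\<dots> = e" using nx by (simp add: t_def)
    finally show "proj sx i (t *\<^sub>R x) \<in> Z i" using e(2)[OF proj_loc] by blast
  qed
  with t0 show ?thesis by blast
qed

lemma re_im_iter:
  "(((*v) (cmat (A + B ** K))) ^^ k) v =
     (\<chi> c. complex_of_real ((Fm ^^ k) (\<chi> c. Re (v $ c)) $ c) + \<i> * complex_of_real ((Fm ^^ k) (\<chi> c. Im (v $ c)) $ c))"
proof (induction k)
  case 0 show ?case by (simp add: Finite_Cartesian_Product.vec_eq_iff complex_eq)
next
  case (Suc k)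
  show ?case by (simp add: Suc cmat_ri)
qed

lemma ev_iter: "cmat M *v v = lam *s v \<Longrightarrow> (((*v) (cmat M)) ^^ k) v = lam^k *s v"
proof (induction k)
  case 0 thus ?case by simp
next
  case (Suc k)
  thus ?case by (simp add: vec.scale vector_smult_assoc mult.commute)
qed

theorem F_schur_main: "schur (A + B ** K)"
  unfolding schur_def
proof (intro allI impI)
  fix lam :: complex and v :: "complex^'n"
  assume h: "v \<noteq> 0 \<and> cmat (A + B ** K) *v v = lam *s v"
  show "cmod lam < 1"
  proof (rule ccontr)
    assume "\<not> cmod lam < 1"
    hence l1: "cmod lam \<ge> 1" by simp
    from h obtain c0 where c0: "v $ c0 \<noteq> 0" by (auto simp: Finite_Cartesian_Product.vec_eq_iff)
    obtain Nn rho where rho: "0 < rho" "rho < 1"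
      "\<And>x m. x \<in> Zg \<Longrightarrow> \<exists>y\<in>Zg. (Fm ^^ (Nn * m)) x = rho^m *\<^sub>R y"
      using RHO by blast
    obtain R where R: "\<And>y. y \<in> Zg \<Longrightarrow> norm y \<le> R" using Zg_bounded by blast
    have bnd: "\<exists>C\<ge>0. \<forall>m. norm ((Fm ^^ (Nn * m)) x) \<le> C * rho^m" for x
    proof -
      obtain t where t: "t > 0" "t *\<^sub>R x \<in> Zg" using Zg_absorb by blast
      have "norm ((Fm ^^ (Nn * m)) x) \<le> (\<bar>R\<bar> / t) * rho^m" for m
      proof -
        obtain y where y: "y \<in> Zg" "(Fm ^^ (Nn * m)) (t *\<^sub>R x) = rho^m *\<^sub>R y"
          using rho(3)[OF t(2)] by blast
        have e: "t *\<^sub>R (Fm ^^ (Nn * m)) x = rho^m *\<^sub>R y" using y(2) by (simp add: Fm_pow_scale)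
        have "norm (t *\<^sub>R (Fm ^^ (Nn * m)) x) = norm (rho^m *\<^sub>R y)" by (simp only: e)
        hence "t * norm ((Fm ^^ (Nn * m)) x) = rho^m * norm y" using t rho by simp
        also have "\<dots> \<le> rho^m * \<bar>R\<bar>" using R[OF y(1)] rho by (intro mult_left_mono) auto
        finally show ?thesis using t by (simp add: field_simps)
      qed
      thus ?thesis using t by (intro exI[of _ "\<bar>R\<bar>/t"]) auto
    qed
    obtain Ca where Ca: "Ca \<ge> 0" "\<And>m. norm ((Fm ^^ (Nn * m)) (\<chi> c. Re (v $ c))) \<le> Ca * rho^m"
      using bnd by blast
    obtain Cb where Cb: "Cb \<ge> 0" "\<And>m. norm ((Fm ^^ (Nn * m)) (\<chi> c. Im (v $ c))) \<le> Cb * rho^m"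
      using bnd by blast
    have pos: "cmod (v $ c0) / (Ca + Cb + 1) > 0" using c0 Ca Cb by simp
    obtain m where m: "rho^m < cmod (v $ c0) / (Ca + Cb + 1)"
      using real_arch_pow_inv[OF pos rho(2)] by blast
    define k where "k = Nn * m"
    have "lam^k * v $ c0 = complex_of_real ((Fm ^^ k) (\<chi> c. Re (v $ c)) $ c0)
          + \<i> * complex_of_real ((Fm ^^ k) (\<chi> c. Im (v $ c)) $ c0)"
      using re_im_iter[of k v] ev_iter[of "A + B ** K" v lam k] h
      by (simp add: Finite_Cartesian_Product.vec_eq_iff)
    hence "cmod (lam^k * v $ c0) \<le> \<bar>(Fm ^^ k) (\<chi> c. Re (v $ c)) $ c0\<bar> + \<bar>(Fm ^^ k) (\<chi> c. Im (v $ c)) $ c0\<bar>"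
      using cmod_le[of "lam^k * v $ c0"] by simp
    also have "\<dots> \<le> Ca * rho^m + Cb * rho^m"
      using Ca(2)[of m] Cb(2)[of m] component_le_norm_cart[of "(Fm ^^ k) (\<chi> c. Re (v $ c))" c0]
        component_le_norm_cart[of "(Fm ^^ k) (\<chi> c. Im (v $ c))" c0]
      unfolding k_def by linarith
    also have "\<dots> \<le> (Ca + Cb + 1) * rho^m" using rho by (simp add: algebra_simps)
    also have "\<dots> < cmod (v $ c0)"
      using m Ca Cb by (simp add: field_simps)
    finally have "cmod lam ^ k * cmod (v $ c0) < cmod (v $ c0)" by (simp add: norm_mult norm_power)
    moreover have "1 \<le> cmod lam ^ k" using l1 by (rule one_le_power)
    ultimately show False using c0
      by (smt (verit) mult_le_cancel_right1 norm_ge_zero)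
  qed
qed

end


theorem mainTheorem4:
  fixes A :: "real^'n^'n" and B :: "real^'p^'n" and K :: "real^'n^'p"
    and sx :: "'n \<Rightarrow> 'm::finite" and su :: "'p \<Rightarrow> 'm"
    and N :: "'m \<Rightarrow> 'm set"
    and X Z Xh :: "'m \<Rightarrow> (real^'n) set" and U Uh :: "'m \<Rightarrow> (real^'p) set"
  assumes nbr: "\<forall>i. i \<notin> N i"
    and A_struct: "\<forall>r c. A $ r $ c \<noteq> 0 \<longrightarrow> sx c \<in> N (sx r) \<union> {sx r}"
    and B_struct: "\<forall>r c. B $ r $ c \<noteq> 0 \<longrightarrow> su c \<in> N (sx r) \<union> {sx r}"
    and K_diag: "\<forall>r c. K $ r $ c \<noteq> 0 \<longrightarrow> su r = sx c"
    and X_set: "\<forall>i. local_C_set sx i (X i)"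
    and U_set: "\<forall>i. local_C_set su i (U i)"
    and F_schur: "\<forall>i. schur (blk sx sx i i A + blk sx su i i B ** blk su sx i i K)"
    and Z_set: "\<forall>i. local_C_set sx i (Z i)"
    and Z_inv: "\<forall>i. msum ((\<lambda>x. (blk sx sx i i A + blk sx su i i B ** blk su sx i i K) *v x) ` Z i)
                        (wset A B sx su N X U i) \<subseteq> Z i"
    and Xh_set: "\<forall>i. local_C_set sx i (Xh i)"
    and Uh_set: "\<forall>i. local_C_set su i (Uh i)"
    and Xh_sub: "\<forall>i. Xh i \<subseteq> pdiff (X i) (Z i)"
    and Uh_sub: "\<forall>i. Uh i \<subseteq> pdiff (U i) ((\<lambda>x. blk su sx i i K *v x) ` Z i)"
  shows "schur (A + B ** K)"
proof -
  have "setting A B K sx su N X Z Xh U Uh"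
    unfolding setting_def using nbr A_struct B_struct K_diag X_set U_set F_schur Z_set Z_inv
      Xh_set Uh_set Xh_sub Uh_sub by blast
  thus ?thesis by (rule setting.F_schur_main)
qed

end
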